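(* Let $k \ge 1$. For every instance $(d,\mathcal{C},k)$ of $k$-center and every execution of the reverse greedy algorithm on it (with any tie-breaking), the returned set $F_{n-k}$ satisfies $\mathrm{cost}(F_{n-k}) \le 2k\cdot \mathrm{OPT}$. Conversely, for every $k$ there exists an instance of $k$-center and an execution of reverse greedy on it (for some valid choice of tie-breaking) whose returned solution has cost $(2k-2)\cdot\mathrm{OPT}$. That is, reverse greedy is between a $(2k-2)$-approximation and a $2k$-approximation for $k$-center.
   Context: An instance of $k$-center consists of a finite metric space $(d,\mathcal{C})$ with $|\mathcal{C}| = n$ and an integer $k\in\mathbb{N}$ with $k\le n$. Every point of $\mathcal{C}$ is both a client and a potential facility. For $c\in\mathcal{C}$ and nonempty $F\subseteq\mathcal{C}$, $d(c,F):=\min_{f\in F} d(c,f)$, and $\mathrm{cost}(F):=\max_{c\in\mathcal{C}} d(c,F)$. $\mathrm{OPT}$ is the minimum of $\mathrm{cost}(F)$ over all $F\subseteq\mathcal{C}$ with $|F|\le k$. The reverse greedy algorithm sets $F_0:=\mathcal{C}$ and, for $i=1,\dots,n-k$, chooses $f_i\in\arg\min_{f\in F_{i-1}}\mathrm{cost}(F_{i-1}\setminus\{f\})$ (ties broken arbitrarily) and sets $F_i:=F_{i-1}\setminus\{f_i\}$; it returns $F_{n-k}$. An execution is any run of this algorithm corresponding to some choice of tie-breaking. *)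

theory Defs
  imports Main "HOL.Real"
begin

definition metric_on :: "'a set \<Rightarrow> ('a \<Rightarrow> 'a \<Rightarrow> real) \<Rightarrow> bool" where
  "metric_on C d \<longleftrightarrow>
     (\<forall>x\<in>C. \<forall>y\<in>C. d x y \<ge> 0 \<and> (d x y = 0 \<longleftrightarrow> x = y) \<and> d x y = d y x) \<and>
     (\<forall>x\<in>C. \<forall>y\<in>C. \<forall>z\<in>C. d x z \<le> d x y + d y z)"

definition dist_to :: "('a \<Rightarrow> 'a \<Rightarrow> real) \<Rightarrow> 'a set \<Rightarrow> 'a \<Rightarrow> real" where
  "dist_to d F c = Min ((\<lambda>f. d c f) ` F)"

definition kc_cost :: "'a set \<Rightarrow> ('a \<Rightarrow> 'a \<Rightarrow> real) \<Rightarrow> 'a set \<Rightarrow> real" where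
  "kc_cost C d F = Max ((dist_to d F) ` C)"

definition kc_OPT :: "'a set \<Rightarrow> ('a \<Rightarrow> 'a \<Rightarrow> real) \<Rightarrow> nat \<Rightarrow> real" where
  "kc_OPT C d k = Min {kc_cost C d F | F. F \<subseteq> C \<and> F \<noteq> {} \<and> card F \<le> k}"

text \<open>Fs is an execution of reverse greedy: Fs 0 = C and, for i < n - k,
  Fs (i+1) = Fs i - {f} for some f in Fs i minimising cost(Fs i - {f}).
  The returned set is Fs (card C - k).\<close>
definition rev_greedy_exec :: "'a set \<Rightarrow> ('a \<Rightarrow> 'a \<Rightarrow> real) \<Rightarrow> nat \<Rightarrow> (nat \<Rightarrow> 'a set) \<Rightarrow> bool" where
  "rev_greedy_exec C d k Fs \<longleftrightarrow>
     Fs 0 = C \<and>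
     (\<forall>i < card C - k. \<exists>f \<in> Fs i. Fs (Suc i) = Fs i - {f} \<and>
        (\<forall>g \<in> Fs i. kc_cost C d (Fs i - {f}) \<le> kc_cost C d (Fs i - {g})))"

end

theory Submission
  imports Defs "HOL-Library.Nat_Bijection"
begin

lemma dist_to_le:
  assumes "finite F" "f \<in> F"
  shows "dist_to d F c \<le> d c f"
  using assms unfolding dist_to_def by (simp add: Min_le)

lemma dist_to_attained:
  assumes "finite F" "F \<noteq> {}"
  shows "\<exists>f\<in>F. dist_to d F c = d c f"
proof -
  have "Min ((\<lambda>f. d c f) ` F) \<in> (\<lambda>f. d c f) ` F"
    using assms by (intro Min_in) auto
  then show ?thesis unfolding dist_to_def by auto
qed

lemma dist_to_mono:
  assumes "finite F" "F' \<subseteq> F" "F' \<noteq> {}"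
  shows "dist_to d F c \<le> dist_to d F' c"
proof -
  have "finite F'" using assms finite_subset by blast
  then obtain f where "f \<in> F'" "dist_to d F' c = d c f" using dist_to_attained[OF _ assms(3)] by blast
  then show ?thesis using dist_to_le[OF assms(1)] assms(2) by auto
qed

lemma cost_ge:
  assumes "finite C" "c \<in> C"
  shows "dist_to d F c \<le> kc_cost C d F"
  using assms unfolding kc_cost_def by (simp add: Max_ge)

lemma cost_le:
  assumes "finite C" "C \<noteq> {}" "\<And>c. c \<in> C \<Longrightarrow> dist_to d F c \<le> v"
  shows "kc_cost C d F \<le> v"
  using assms unfolding kc_cost_def by (simp add: Max_le_iff)

lemma cost_attained:
  assumes "finite C" "C \<noteq> {}"
  shows "\<exists>c\<in>C. kc_cost C d F = dist_to d F c"
proof -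
  have "Max ((dist_to d F) ` C) \<in> (dist_to d F) ` C"
    using assms by (intro Max_in) auto
  then show ?thesis unfolding kc_cost_def by auto
qed

lemma cost_mono:
  assumes "finite C" "C \<noteq> {}" "finite F" "F' \<subseteq> F" "F' \<noteq> {}"
  shows "kc_cost C d F \<le> kc_cost C d F'"
proof (rule cost_le[OF assms(1,2)])
  fix c assume "c \<in> C"
  have "dist_to d F c \<le> dist_to d F' c" using dist_to_mono[OF assms(3,4,5)] .
  also have "\<dots> \<le> kc_cost C d F'" using cost_ge[OF assms(1) \<open>c \<in> C\<close>] .
  finally show "dist_to d F c \<le> kc_cost C d F'" .
qed

lemma OPT_attained:
  assumes "finite C" "C \<noteq> {}" "1 \<le> k"
  shows "\<exists>Oc. Oc \<subseteq> C \<and> Oc \<noteq> {} \<and> card Oc \<le> k \<and> kc_OPT C d k = kc_cost C d Oc"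
proof -
  let ?S = "{kc_cost C d F | F. F \<subseteq> C \<and> F \<noteq> {} \<and> card F \<le> k}"
  have fin: "finite ?S"
  proof -
    have "?S \<subseteq> (kc_cost C d) ` Pow C" by auto
    then show ?thesis using assms(1) finite_subset by blast
  qed
  obtain c where "c \<in> C" using assms by blast
  then have "kc_cost C d {c} \<in> ?S" using assms by force
  then have ne: "?S \<noteq> {}" by blast
  have "Min ?S \<in> ?S" using fin ne by (rule Min_in)
  then show ?thesis unfolding kc_OPT_def by auto
qed

lemma dist_nonneg:
  assumes "metric_on C d" "c \<in> C" "finite F" "F \<noteq> {}" "F \<subseteq> C"
  shows "0 \<le> dist_to d F c"
proof -
  obtain f where "f \<in> F" "dist_to d F c = d c f" using dist_to_attained[OF assms(3,4)] by blast
  then show ?thesis using assms(1,2,5) unfolding metric_on_def by auto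
qed

theorem part1:
  assumes finC: "finite C" and k1: "1 \<le> k" and kC: "k \<le> card C" and met: "metric_on C d"
    and ex: "rev_greedy_exec C d k Fs"
  shows "kc_cost C d (Fs (card C - k)) \<le> 2 * real k * kc_OPT C d k"
proof -
  have Cne: "C \<noteq> {}" using k1 kC by auto
  obtain Oc where Oc: "Oc \<subseteq> C" "Oc \<noteq> {}" "card Oc \<le> k" and rdef: "kc_OPT C d k = kc_cost C d Oc"
    using OPT_attained[OF finC Cne k1] by blast
  define r where "r = kc_OPT C d k"
  have finOc: "finite Oc" using Oc finC finite_subset by blast
  have r0: "0 \<le> r"
  proof -
    obtain c where "c \<in> C" using Cne by blast
    then have "0 \<le> dist_to d Oc c" using dist_nonneg[OF met _ finOc Oc(2) Oc(1)] by blast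
    also have "\<dots> \<le> r" unfolding r_def rdef using cost_ge[OF finC \<open>c \<in> C\<close>] .
    finally show ?thesis .
  qed
  define cl where "cl c = (SOME o'. o' \<in> Oc \<and> d c o' \<le> r)" for c
  have cl: "cl c \<in> Oc \<and> d c (cl c) \<le> r" if "c \<in> C" for c
  proof -
    obtain o' where "o' \<in> Oc" "dist_to d Oc c = d c o'" using dist_to_attained[OF finOc Oc(2)] by blast
    moreover have "dist_to d Oc c \<le> r" unfolding r_def rdef using cost_ge[OF finC that] .
    ultimately have "\<exists>o'. o' \<in> Oc \<and> d c o' \<le> r" by auto
    then show ?thesis unfolding cl_def by (rule someI_ex)
  qed
  have dsym: "d x y = d y x" if "x \<in> C" "y \<in> C" for x y using met that unfolding metric_on_def by auto
  have tri: "d x z \<le> d x y + d y z" if "x \<in> C" "y \<in> C" "z \<in> C" for x y z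
    using met that unfolding metric_on_def by auto
  have clC: "cl c \<in> C" if "c \<in> C" for c using cl[OF that] Oc(1) by auto
  have cl2: "d (cl c) c \<le> r" if "c \<in> C" for c using cl[OF that] dsym[OF clC[OF that] that] by auto
  have la: "kc_cost C d F \<le> kc_cost C d (cl ` F) + r" if hF: "F \<subseteq> C" "F \<noteq> {}" "finite F" for F
  proof (rule cost_le[OF finC Cne])
    fix c assume c: "c \<in> C"
    obtain o' where o': "o' \<in> cl ` F" "dist_to d (cl ` F) c = d c o'"
      using dist_to_attained[of "cl ` F" d c] finite_imageI[OF hF(3)] hF(2) by auto
    then obtain q where q: "q \<in> F" "o' = cl q" by blast
    have qC: "q \<in> C" using q hF by auto
    have "dist_to d F c \<le> d c q" using dist_to_le[OF hF(3) q(1)] .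
    also have "\<dots> \<le> d c (cl q) + d (cl q) q" using tri[OF c clC[OF qC] qC] .
    also have "\<dots> \<le> dist_to d (cl ` F) c + r" using o' q cl2[OF qC] by auto
    also have "\<dots> \<le> kc_cost C d (cl ` F) + r" using cost_ge[OF finC c] by auto
    finally show "dist_to d F c \<le> kc_cost C d (cl ` F) + r" .
  qed
  have lb: "kc_cost C d (cl ` F) \<le> kc_cost C d F + r" if hF: "F \<subseteq> C" "F \<noteq> {}" "finite F" for F
  proof (rule cost_le[OF finC Cne])
    fix c assume c: "c \<in> C"
    obtain q where q: "q \<in> F" "dist_to d F c = d c q"
      using dist_to_attained[of F d c] hF(2,3) by auto
    have qC: "q \<in> C" using q hF by auto
    have "dist_to d (cl ` F) c \<le> d c (cl q)" using dist_to_le[of "cl ` F" "cl q"] hF q by auto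
    also have "\<dots> \<le> d c q + d q (cl q)" using tri[OF c qC clC[OF qC]] .
    also have "\<dots> \<le> dist_to d F c + r" using q cl[OF qC] by auto
    also have "\<dots> \<le> kc_cost C d F + r" using cost_ge[OF finC c] by auto
    finally show "dist_to d (cl ` F) c \<le> kc_cost C d F + r" .
  qed
  have lc: "kc_cost C d (cl ` C) \<le> r"
  proof (rule cost_le[OF finC Cne])
    fix c assume c: "c \<in> C"
    have "dist_to d (cl ` C) c \<le> d c (cl c)" using dist_to_le[of "cl ` C" "cl c"] finC c by auto
    then show "dist_to d (cl ` C) c \<le> r" using cl[OF c] by auto
  qed
  have clO: "cl ` F \<subseteq> Oc" if "F \<subseteq> C" for F using cl that by auto
  have cardcl: "card (cl ` F) \<le> k" if "F \<subseteq> C" for F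
    using card_mono[OF finOc clO[OF that]] Oc(3) by linarith
  have ld: "\<exists>g\<in>F. cl ` (F - {g}) = cl ` F" if "F \<subseteq> C" "k < card F" for F
  proof -
    have "\<not> inj_on cl F"
    proof
      assume "inj_on cl F"
      then have "card (cl ` F) = card F" by (rule card_image)
      then show False using cardcl[OF that(1)] that(2) by linarith
    qed
    then obtain g h where gh: "g \<in> F" "h \<in> F" "g \<noteq> h" "cl g = cl h" unfolding inj_on_def by blast
    have "cl ` (F - {g}) = cl ` F"
    proof
      show "cl ` (F - {g}) \<subseteq> cl ` F" by auto
      show "cl ` F \<subseteq> cl ` (F - {g})"
      proof
        fix x assume "x \<in> cl ` F"
        then obtain y where y: "y \<in> F" "x = cl y" by blast
        show "x \<in> cl ` (F - {g})"
        proof (cases "y = g")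
          case True then show ?thesis using gh y by (metis DiffI empty_iff image_eqI insert_iff)
        next
          case False then show ?thesis using y by auto
        qed
      qed
    qed
    then show ?thesis using gh(1) by blast
  qed
  have exs: "Fs 0 = C" "\<And>i. i < card C - k \<Longrightarrow> \<exists>f \<in> Fs i. Fs (Suc i) = Fs i - {f} \<and>
        (\<forall>g \<in> Fs i. kc_cost C d (Fs i - {f}) \<le> kc_cost C d (Fs i - {g}))"
    using ex unfolding rev_greedy_exec_def by auto
  have inv: "Fs t \<subseteq> C \<and> card (Fs t) = card C - t \<and>
      kc_cost C d (cl ` Fs t) \<le> r + 2 * r * (real k - real (card (cl ` Fs t)))"
    if "t \<le> card C - k" for t
    using that
  proof (induction t)
    case 0
    have "0 \<le> 2 * r * (real k - real (card (cl ` C)))"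
      using r0 cardcl[of C] by auto
    then show ?case using exs(1) lc by auto
  next
    case (Suc t)
    then have IH: "Fs t \<subseteq> C" "card (Fs t) = card C - t"
      "kc_cost C d (cl ` Fs t) \<le> r + 2 * r * (real k - real (card (cl ` Fs t)))" by auto
    have tl: "t < card C - k" using Suc.prems by auto
    obtain f where f: "f \<in> Fs t" "Fs (Suc t) = Fs t - {f}"
      "\<forall>g \<in> Fs t. kc_cost C d (Fs t - {f}) \<le> kc_cost C d (Fs t - {g})"
      using exs(2)[OF tl] by blast
    have finF: "finite (Fs t)" using IH(1) finC finite_subset by blast
    have cardF: "k < card (Fs t)" using IH(2) tl by auto
    have sub': "Fs (Suc t) \<subseteq> C" using f IH by auto
    have card': "card (Fs (Suc t)) = card C - Suc t" using f IH finF card_Diff_singleton by auto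
    obtain g where g: "g \<in> Fs t" "cl ` (Fs t - {g}) = cl ` Fs t" using ld[OF IH(1) cardF] by blast
    have ne_g: "Fs t - {g} \<noteq> {}"
    proof
      assume "Fs t - {g} = {}"
      then have "Fs t \<subseteq> {g}" by auto
      then have "card (Fs t) \<le> card {g}" by (intro card_mono) auto
      then have "card (Fs t) \<le> 1" by simp
      then show False using cardF k1 by linarith
    qed
    have ne': "Fs (Suc t) \<noteq> {}"
    proof
      assume "Fs (Suc t) = {}"
      then have "Fs t \<subseteq> {f}" using f by auto
      then have "card (Fs t) \<le> card {f}" by (intro card_mono) auto
      then have "card (Fs t) \<le> 1" by simp
      then show False using cardF k1 by linarith
    qed
    have fin': "finite (Fs (Suc t))" using f finF by auto
    have step: "kc_cost C d (Fs (Suc t)) \<le> kc_cost C d (cl ` Fs t) + r"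
    proof -
      have "kc_cost C d (Fs (Suc t)) \<le> kc_cost C d (Fs t - {g})" using f g by auto
      also have "\<dots> \<le> kc_cost C d (cl ` (Fs t - {g})) + r"
        using la[of "Fs t - {g}"] IH(1) ne_g finF by auto
      finally show ?thesis using g by simp
    qed
    let ?M = "cl ` Fs t" and ?M' = "cl ` Fs (Suc t)"
    have MM: "?M' \<subseteq> ?M" using f by auto
    have "kc_cost C d ?M' \<le> r + 2 * r * (real k - real (card ?M'))"
    proof (cases "?M' = ?M")
      case True then show ?thesis using IH(3) by simp
    next
      case False
      then have "?M' \<subset> ?M" using MM by auto
      then have "card ?M' < card ?M" using finF by (intro psubset_card_mono) auto
      then have cm: "real (card ?M') \<le> real (card ?M) - 1" by linarith
      have "kc_cost C d ?M' \<le> kc_cost C d (Fs (Suc t)) + r" using lb[OF sub' ne' fin'] .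
      also have "\<dots> \<le> kc_cost C d ?M + 2 * r" using step by simp
      also have "\<dots> \<le> r + 2 * r * (real k - real (card ?M)) + 2 * r" using IH(3) by simp
      also have "\<dots> = r + 2 * r * (real k - (real (card ?M) - 1))" by (simp add: algebra_simps)
      also have "\<dots> \<le> r + 2 * r * (real k - real (card ?M'))"
        using cm r0 by (intro add_left_mono mult_left_mono) auto
      finally show ?thesis .
    qed
    then show ?case using sub' card' by blast
  qed
  let ?E = "Fs (card C - k)"
  have I: "?E \<subseteq> C" "card ?E = k"
    "kc_cost C d (cl ` ?E) \<le> r + 2 * r * (real k - real (card (cl ` ?E)))"
    using inv[of "card C - k"] kC by auto
  have finE: "finite ?E" using I finC finite_subset by blast
  have neE: "?E \<noteq> {}" using I k1 by auto
  have "card (cl ` ?E) \<ge> 1" using neE finE by (simp add: Suc_leI card_gt_0_iff)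
  then have c1: "real k - real (card (cl ` ?E)) \<le> real k - 1" by simp
  have "kc_cost C d ?E \<le> kc_cost C d (cl ` ?E) + r" using la[OF I(1) neE finE] .
  also have "\<dots> \<le> 2 * r + 2 * r * (real k - real (card (cl ` ?E)))" using I(3) by simp
  also have "\<dots> \<le> 2 * r + 2 * r * (real k - 1)"
    using c1 r0 by (intro add_left_mono mult_left_mono) auto
  also have "\<dots> = 2 * real k * r" by (simp add: algebra_simps)
  finally show ?thesis using r_def by simp
qed

definition SS :: "nat \<Rightarrow> nat \<Rightarrow> nat" where
  "SS l l' = (if l = l' then 0 else 2 * l + 2 * l')"

definition NU :: "nat \<Rightarrow> nat \<Rightarrow> nat \<Rightarrow> nat \<Rightarrow> nat" where
  "NU l l' p q = (if p = q then 0 else if p = l \<or> q = l \<or> p = l' \<or> q = l' then 1 else 2)"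

definition dd :: "nat \<times> nat \<Rightarrow> nat \<times> nat \<Rightarrow> real" where
  "dd x y = real (SS (fst x) (fst y) + NU (fst x) (fst y) (snd x) (snd y))"

lemma dd_simp: "dd (l,p) (l',q) = real (SS l l' + NU l l' p q)"
  by (simp add: dd_def)

definition Cp :: "nat \<Rightarrow> (nat \<times> nat) set" where
  "Cp m = {(l,p). l \<le> m \<and> l \<le> p \<and> p \<le> 2*m+3}"

lemma Cp_iff: "(l,p) \<in> Cp m \<longleftrightarrow> l \<le> m \<and> l \<le> p \<and> p \<le> 2*m+3"
  by (simp add: Cp_def)

lemma finite_Cp: "finite (Cp m)"
proof -
  have "Cp m \<subseteq> {0..m} \<times> {0..2*m+3}" by (auto simp: Cp_def)
  then show ?thesis using finite_subset by blast
qed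

lemma tri_nat:
  assumes "l1 \<le> p1" "l2 \<le> p2" "l3 \<le> p3"
  shows "SS l1 l3 + NU l1 l3 p1 p3 \<le> (SS l1 l2 + NU l1 l2 p1 p2) + (SS l2 l3 + NU l2 l3 p2 p3)"
  using assms unfolding SS_def NU_def by (simp split: if_splits)

lemma metric_Cp: "metric_on (Cp m) dd"
  unfolding metric_on_def
proof (intro conjI ballI)
  fix x y assume "x \<in> Cp m" "y \<in> Cp m"
  show "0 \<le> dd x y" by (simp add: dd_def)
  show "dd x y = dd y x" by (auto simp: dd_def SS_def NU_def)
  show "(dd x y = 0) = (x = y)"
    by (cases x, cases y) (auto simp: dd_def SS_def NU_def split: if_splits)
next
  fix x y z assume "x \<in> Cp m" "y \<in> Cp m" "z \<in> Cp m"
  then obtain l1 p1 l2 p2 l3 p3 where xyz: "x = (l1,p1)" "y = (l2,p2)" "z = (l3,p3)"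
    "l1 \<le> p1" "l2 \<le> p2" "l3 \<le> p3" by (cases x, cases y, cases z) (auto simp: Cp_def)
  have "real (SS l1 l3 + NU l1 l3 p1 p3) \<le> real (SS l1 l2 + NU l1 l2 p1 p2) + real (SS l2 l3 + NU l2 l3 p2 p3)"
    using tri_nat[OF xyz(4-6)] by linarith
  then show "dd x z \<le> dd x y + dd y z" using xyz by (simp add: dd_simp)
qed

lemma dd_pos: "x \<noteq> y \<Longrightarrow> 1 \<le> dd x y"
  by (cases x, cases y) (auto simp: dd_def SS_def NU_def)

lemma dd_ge_SS: "real (SS l l') \<le> dd (l,p) (l',q)"
  by (simp add: dd_simp)

lemma dd_le: "dd (l,p) (l',q) \<le> real (SS l l') + 2"
  by (simp add: dd_simp NU_def)

lemma cost_ub: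
  assumes "finite C" "C \<noteq> {}" "finite F" "\<And>c. c \<in> C \<Longrightarrow> \<exists>x\<in>F. d c x \<le> v"
  shows "kc_cost C d F \<le> v"
proof (rule cost_le[OF assms(1,2)])
  fix c assume "c \<in> C"
  then obtain x where "x \<in> F" "d c x \<le> v" using assms(4) by blast
  then show "dist_to d F c \<le> v" using dist_to_le[OF assms(3), of x d c] by linarith
qed

lemma cost_lb:
  assumes "finite C" "c \<in> C" "finite F" "F \<noteq> {}" "\<And>x. x \<in> F \<Longrightarrow> v \<le> d c x"
  shows "v \<le> kc_cost C d F"
proof -
  obtain x where "x \<in> F" "dist_to d F c = d c x" using dist_to_attained[OF assms(3,4)] by blast
  then have "v \<le> dist_to d F c" using assms(5) by simp
  also have "\<dots> \<le> kc_cost C d F" using cost_ge[OF assms(1,2)] .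
  finally show ?thesis .
qed

lemma good_step:
  assumes "finite C" "C \<noteq> {}" "finite F" "f \<in> F"
    and ub: "\<And>c. c \<in> C \<Longrightarrow> \<exists>x\<in>F-{f}. d c x \<le> v"
    and lb: "\<And>g. g \<in> F \<Longrightarrow> g \<noteq> f \<Longrightarrow> \<exists>c\<in>C. \<forall>x\<in>F-{g}. v \<le> d c x"
    and ne: "\<And>g. g \<in> F \<Longrightarrow> F - {g} \<noteq> {}"
  shows "\<forall>g\<in>F. kc_cost C d (F - {f}) \<le> kc_cost C d (F - {g})"
proof
  fix g assume g: "g \<in> F"
  have u: "kc_cost C d (F - {f}) \<le> v" using cost_ub[OF assms(1,2)] assms(3) ub by auto
  show "kc_cost C d (F - {f}) \<le> kc_cost C d (F - {g})"
  proof (cases "g = f")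
    case True then show ?thesis by simp
  next
    case False
    then obtain c where c: "c \<in> C" "\<forall>x\<in>F-{g}. v \<le> d c x" using lb g by blast
    have "finite (F - {g})" using assms(3) by simp
    then have "v \<le> kc_cost C d (F - {g})" using cost_lb[OF assms(1) c(1) _ ne[OF g]] c(2) by blast
    then show ?thesis using u by linarith
  qed
qed

lemma transfer_dist:
  assumes inv: "\<And>x. x \<in> C \<Longrightarrow> g (h x) = x" and "F \<subseteq> C" "c \<in> C"
  shows "dist_to (\<lambda>x y. d (g x) (g y)) (h ` F) (h c) = dist_to d F c"
proof -
  have "(\<lambda>f. d (g (h c)) (g f)) ` h ` F = (\<lambda>f. d c f) ` F"
    unfolding image_image using assms by (intro image_cong) auto
  then show ?thesis unfolding dist_to_def by simp
qed

lemma transfer_cost: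
  assumes inv: "\<And>x. x \<in> C \<Longrightarrow> g (h x) = x" and "F \<subseteq> C"
  shows "kc_cost (h ` C) (\<lambda>x y. d (g x) (g y)) (h ` F) = kc_cost C d F"
proof -
  have "(dist_to (\<lambda>x y. d (g x) (g y)) (h ` F)) ` h ` C = (dist_to d F) ` C"
    unfolding image_image using transfer_dist[where C=C and g=g and h=h and F=F and d=d, OF inv assms(2)] by (intro image_cong) auto
  then show ?thesis unfolding kc_cost_def by simp
qed

lemma transfer_OPT:
  assumes inv: "\<And>x. x \<in> C \<Longrightarrow> g (h x) = x"
  shows "kc_OPT (h ` C) (\<lambda>x y. d (g x) (g y)) k = kc_OPT C d k"
proof -
  have injh: "inj_on h C"
  proof (rule inj_onI)
    fix x y assume "x \<in> C" "y \<in> C" "h x = h y"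
    then show "x = y" using inv by metis
  qed
  let ?d' = "\<lambda>x y. d (g x) (g y)"
  have "{kc_cost (h ` C) ?d' F' | F'. F' \<subseteq> h ` C \<and> F' \<noteq> {} \<and> card F' \<le> k}
      = {kc_cost C d F | F. F \<subseteq> C \<and> F \<noteq> {} \<and> card F \<le> k}" (is "?A = ?B")
  proof
    show "?A \<subseteq> ?B"
    proof
      fix z assume "z \<in> ?A"
      then obtain F' where F': "z = kc_cost (h ` C) ?d' F'" "F' \<subseteq> h ` C" "F' \<noteq> {}" "card F' \<le> k"
        by blast
      define F where "F = g ` F'"
      have hg: "h (g y) = y" if "y \<in> F'" for y
      proof -
        obtain x where "x \<in> C" "y = h x" using F'(2) \<open>y \<in> F'\<close> by blast
        then show ?thesis using inv by simp
      qed
      have gC: "g y \<in> C" if "y \<in> F'" for y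
      proof -
        obtain x where "x \<in> C" "y = h x" using F'(2) \<open>y \<in> F'\<close> by blast
        then show ?thesis using inv by simp
      qed
      have FC: "F \<subseteq> C" using gC unfolding F_def by blast
      have hF: "h ` F = F'" unfolding F_def image_image using hg by simp
      have "card F = card F'" using hF card_image[OF inj_on_subset[OF injh FC]] by simp
      moreover have "z = kc_cost C d F" using F'(1) hF transfer_cost[where C=C and g=g and h=h and d=d, OF inv FC] by simp
      moreover have "F \<noteq> {}" using F'(3) unfolding F_def by simp
      ultimately have "z = kc_cost C d F \<and> F \<subseteq> C \<and> F \<noteq> {} \<and> card F \<le> k" using FC F'(4) by auto
      then show "z \<in> ?B" by blast
    qed
  next
    show "?B \<subseteq> ?A"
    proof
      fix z assume "z \<in> ?B"
      then obtain F where F: "z = kc_cost C d F" "F \<subseteq> C" "F \<noteq> {}" "card F \<le> k" by blast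
      have "card (h ` F) = card F" using card_image[OF inj_on_subset[OF injh F(2)]] .
      moreover have "z = kc_cost (h ` C) ?d' (h ` F)" using F(1) transfer_cost[where C=C and g=g and h=h and d=d, OF inv F(2)] by simp
      ultimately have "z = kc_cost (h ` C) ?d' (h ` F) \<and> h ` F \<subseteq> h ` C \<and> h ` F \<noteq> {} \<and> card (h ` F) \<le> k"
        using F by auto
      then show "z \<in> ?A" by blast
    qed
  qed
  then show ?thesis unfolding kc_OPT_def by simp
qed

lemma transfer_metric:
  assumes inv: "\<And>x. x \<in> C \<Longrightarrow> g (h x) = x" and "metric_on C d"
  shows "metric_on (h ` C) (\<lambda>x y. d (g x) (g y))"
proof -
  have m: "\<forall>x\<in>C. \<forall>y\<in>C. d x y \<ge> 0 \<and> (d x y = 0 \<longleftrightarrow> x = y) \<and> d x y = d y x"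
    "\<forall>x\<in>C. \<forall>y\<in>C. \<forall>z\<in>C. d x z \<le> d x y + d y z" using assms(2) unfolding metric_on_def by auto
  show ?thesis unfolding metric_on_def
  proof (intro conjI ballI)
    fix x y assume "x \<in> h ` C" "y \<in> h ` C"
    then obtain x0 y0 where xy: "x0 \<in> C" "y0 \<in> C" "x = h x0" "y = h y0" by blast
    have gx: "g x = x0" "g y = y0" using xy inv by auto
    show "d (g x) (g y) \<ge> 0" using m(1) xy(1,2) gx by auto
    show "d (g x) (g y) = d (g y) (g x)" using m(1) xy(1,2) gx by auto
    have e: "(x = y) = (x0 = y0)" using xy(3,4) gx by metis
    show "(d (g x) (g y) = 0) = (x = y)" unfolding e gx using m(1) xy(1,2) by blast
  next
    fix x y z assume "x \<in> h ` C" "y \<in> h ` C" "z \<in> h ` C"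
    then obtain x0 y0 z0 where xy: "x0 \<in> C" "y0 \<in> C" "z0 \<in> C" "x = h x0" "y = h y0" "z = h z0" by blast
    have gx: "g x = x0" "g y = y0" "g z = z0" using xy inv by auto
    show "d (g x) (g z) \<le> d (g x) (g y) + d (g y) (g z)" using m(2) xy(1-3) gx by auto
  qed
qed

lemma transfer_exec:
  assumes inv: "\<And>x. x \<in> C \<Longrightarrow> g (h x) = x" and ex: "rev_greedy_exec C d k Fs"
    and sub: "\<And>t. Fs t \<subseteq> C"
  shows "rev_greedy_exec (h ` C) (\<lambda>x y. d (g x) (g y)) k (\<lambda>t. h ` Fs t)"
proof -
  have injh: "inj_on h C"
  proof (rule inj_onI)
    fix x y assume "x \<in> C" "y \<in> C" "h x = h y"
    then show "x = y" using inv by metis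
  qed
  have cardeq: "card (h ` C) = card C" using card_image[OF injh] .
  have e0: "Fs 0 = C" and es: "\<And>i. i < card C - k \<Longrightarrow> \<exists>f \<in> Fs i. Fs (Suc i) = Fs i - {f} \<and>
        (\<forall>g \<in> Fs i. kc_cost C d (Fs i - {f}) \<le> kc_cost C d (Fs i - {g}))"
    using ex unfolding rev_greedy_exec_def by auto
  have imd: "h ` (Fs i - {f}) = h ` Fs i - {h f}" if "f \<in> Fs i" for i f
    using inj_on_subset[OF injh sub[of i]] that by (auto simp: inj_on_def)
  show ?thesis unfolding rev_greedy_exec_def
  proof (intro conjI allI impI)
    show "h ` Fs 0 = h ` C" using e0 by simp
  next
    fix i assume "i < card (h ` C) - k"
    then have "i < card C - k" using cardeq by simp
    then obtain f where f: "f \<in> Fs i" "Fs (Suc i) = Fs i - {f}"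
      "\<forall>g \<in> Fs i. kc_cost C d (Fs i - {f}) \<le> kc_cost C d (Fs i - {g})" using es by blast
    show "\<exists>f' \<in> h ` Fs i. h ` Fs (Suc i) = h ` Fs i - {f'} \<and>
        (\<forall>g' \<in> h ` Fs i. kc_cost (h ` C) (\<lambda>x y. d (g x) (g y)) (h ` Fs i - {f'})
             \<le> kc_cost (h ` C) (\<lambda>x y. d (g x) (g y)) (h ` Fs i - {g'}))"
    proof (intro bexI conjI ballI)
      show "h f \<in> h ` Fs i" using f(1) by simp
      show "h ` Fs (Suc i) = h ` Fs i - {h f}" using f(2) imd[OF f(1)] by simp
      fix g' assume "g' \<in> h ` Fs i"
      then obtain g0 where g0: "g0 \<in> Fs i" "g' = h g0" by blast
      have s1: "Fs i - {f} \<subseteq> C" "Fs i - {g0} \<subseteq> C" using sub[of i] by auto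
      show "kc_cost (h ` C) (\<lambda>x y. d (g x) (g y)) (h ` Fs i - {h f})
             \<le> kc_cost (h ` C) (\<lambda>x y. d (g x) (g y)) (h ` Fs i - {g'})"
        using f(3) g0 imd[OF f(1)] imd[OF g0(1)] transfer_cost[where C=C and g=g and h=h and d=d, OF inv s1(1)] transfer_cost[where C=C and g=g and h=h and d=d, OF inv s1(2)]
        by simp
    qed
  qed
qed

definition Xs :: "nat \<Rightarrow> nat \<Rightarrow> (nat \<times> nat) set" where
  "Xs m s = {x. fst x = 0 \<and> s \<le> snd x \<and> snd x \<le> 2*m+3}"
definition Cs :: "nat \<Rightarrow> nat \<Rightarrow> (nat \<times> nat) set" where
  "Cs m s = {x. fst x = snd x \<and> s \<le> fst x \<and> fst x \<le> m}"
definition GC where "GC m l = Xs m l \<union> Cs m l"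
definition GD where "GD m l = Xs m l \<union> Cs m (Suc l)"

lemma Xs_iff[simp]: "(a,b) \<in> Xs m s \<longleftrightarrow> a = 0 \<and> s \<le> b \<and> b \<le> 2*m+3" by (simp add: Xs_def)
lemma Cs_iff[simp]: "(a,b) \<in> Cs m s \<longleftrightarrow> a = b \<and> s \<le> a \<and> a \<le> m" by (simp add: Cs_def)

lemma Cp_ne: "Cp m \<noteq> {}" using Cp_iff[of 0 0 m] by blast

lemma finite_sub_Cp: "F \<subseteq> Cp m \<Longrightarrow> finite F" using finite_Cp finite_subset by blast

lemma Xs_sub: "Xs m s \<subseteq> Cp m" by (auto simp: Xs_def Cp_def)
lemma Cs_sub: "Cs m s \<subseteq> Cp m" by (auto simp: Cs_def Cp_def)
lemma GC_sub: "GC m l \<subseteq> Cp m" using Xs_sub Cs_sub by (auto simp: GC_def)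
lemma GD_sub: "GD m l \<subseteq> Cp m" using Xs_sub Cs_sub by (auto simp: GD_def)

lemma two_ne: "a \<in> F \<Longrightarrow> b \<in> F \<Longrightarrow> a \<noteq> b \<Longrightarrow> F - {g} \<noteq> {}" by blast

lemma top2_ne: "(0::nat, 2*m+3) \<noteq> (0::nat, 2*(m::nat)+2)" by simp

lemma dd_to_top: "dd (j,p) (0, 2*m+3) \<le> real (2*j+2)"
  by (simp add: dd_simp SS_def NU_def)

lemma phaseA:
  assumes F: "F \<subseteq> Cp m" "f \<in> F" "GC m 1 \<subseteq> F - {f}"
  shows "\<forall>g\<in>F. kc_cost (Cp m) dd (F - {f}) \<le> kc_cost (Cp m) dd (F - {g})"
proof (rule good_step[OF finite_Cp Cp_ne finite_sub_Cp[OF F(1)] F(2), where v=1])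
  fix c assume "c \<in> Cp m"
  then obtain l p where c: "c = (l,p)" "l \<le> m" "l \<le> p" "p \<le> 2*m+3" by (cases c) (auto simp: Cp_iff)
  show "\<exists>x\<in>F-{f}. dd c x \<le> 1"
  proof (cases "l = 0")
    case True
    show ?thesis
    proof (cases "p = 0")
      case True
      have "(0, 2*m+3) \<in> GC m 1" by (simp add: GC_def)
      then have "(0, 2*m+3) \<in> F - {f}" using F(3) by blast
      moreover have "dd c (0, 2*m+3) \<le> 1" using c \<open>l = 0\<close> True by (simp add: dd_simp SS_def NU_def)
      ultimately show ?thesis by blast
    next
      case False
      have "c \<in> GC m 1" using c \<open>l = 0\<close> False by (simp add: GC_def)
      then have "c \<in> F - {f}" using F(3) by blast
      moreover have "dd c c \<le> 1" by (cases c) (simp add: dd_simp SS_def NU_def)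
      ultimately show ?thesis by blast
    qed
  next
    case False
    have "(l,l) \<in> GC m 1" using c False by (simp add: GC_def)
    then have "(l,l) \<in> F - {f}" using F(3) by blast
    moreover have "dd c (l,l) \<le> 1" using c by (simp add: dd_simp SS_def NU_def)
    ultimately show ?thesis by blast
  qed
next
  fix g assume g: "g \<in> F" "g \<noteq> f"
  have "g \<in> Cp m" using g F(1) by blast
  moreover have "\<forall>x\<in>F-{g}. 1 \<le> dd g x" by (metis DiffD2 dd_pos singletonI)
  ultimately show "\<exists>c\<in>Cp m. \<forall>x\<in>F-{g}. 1 \<le> dd c x" by blast
next
  fix g assume g: "g \<in> F"
  have "(0, 2*m+3) \<in> GC m 1" "(0, 2*m+2) \<in> GC m 1" by (auto simp: GC_def)
  then have "(0, 2*m+3) \<in> F" "(0, 2*m+2) \<in> F" using F(3) by blast+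
  then show "F - {g} \<noteq> {}" using two_ne top2_ne by metis
qed

lemma GC_minus: "GC m l - {(l,l)} = GD m l" if "1 \<le> l"
  using that by (auto simp: GC_def GD_def)

lemma GD_minus: "GD m l - {(0,l)} = GC m (Suc l)" if "1 \<le> l"
  using that by (auto simp: GC_def GD_def)

lemma phaseC:
  assumes l: "1 \<le> l" "l \<le> m"
  shows "\<forall>g\<in>GC m l. kc_cost (Cp m) dd (GC m l - {(l,l)}) \<le> kc_cost (Cp m) dd (GC m l - {g})"
proof (rule good_step[OF finite_Cp Cp_ne finite_sub_Cp[OF GC_sub], where v="real (2*l)"])
  show "(l,l) \<in> GC m l" using l by (simp add: GC_def)
next
  fix c assume "c \<in> Cp m"
  then obtain j p where c: "c = (j,p)" "j \<le> m" "j \<le> p" "p \<le> 2*m+3" by (cases c) (auto simp: Cp_iff)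
  have G: "GC m l - {(l,l)} = GD m l" using GC_minus l by simp
  show "\<exists>x\<in>GC m l - {(l,l)}. dd c x \<le> real (2*l)"
    unfolding G
  proof (cases "j < l")
    case True
    have "(0, 2*m+3) \<in> GD m l" using l by (simp add: GD_def)
    moreover have "dd c (0, 2*m+3) \<le> real (2*l)" using dd_to_top[of j p m] c True by simp
    ultimately show "\<exists>x\<in>GD m l. dd c x \<le> real (2*l)" by blast
  next
    case False
    show "\<exists>x\<in>GD m l. dd c x \<le> real (2*l)"
    proof (cases "j = l")
      case True
      have "(0, p) \<in> GD m l" using c True by (simp add: GD_def)
      moreover have "dd c (0,p) \<le> real (2*l)" using c True l by (simp add: dd_simp SS_def NU_def)
      ultimately show ?thesis by blast
    next
      case False
      have "(j, j) \<in> GD m l" using c False \<open>\<not> j < l\<close> by (simp add: GD_def)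
      moreover have "dd c (j,j) \<le> real (2*l)" using c l by (simp add: dd_simp SS_def NU_def)
      ultimately show ?thesis by blast
    qed
  qed
next
  fix g assume g: "g \<in> GC m l" "g \<noteq> (l,l)"
  show "\<exists>c\<in>Cp m. \<forall>x\<in>GC m l - {g}. real (2*l) \<le> dd c x"
  proof (cases "fst g = 0")
    case True
    then obtain p where p: "g = (0,p)" "l \<le> p" "p \<le> 2*m+3" using g(1) l
      by (cases g) (auto simp: GC_def)
    obtain l' where l': "l = Suc l'" using l by (cases l) auto
    have "(l', p) \<in> Cp m" using p l l' by (simp add: Cp_iff)
    moreover have "real (2*l) \<le> dd (l',p) x" if "x \<in> GC m l - {g}" for x
    proof -
      obtain a b where x: "x = (a,b)" by (cases x)
      show ?thesis
      proof (cases "a = 0")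
        case True
        then have "l \<le> b" "b \<noteq> p" using that x p by (auto simp: GC_def)
        then show ?thesis using x True p l l' by (simp add: dd_simp SS_def NU_def)
      next
        case False
        then have "a = b" "l \<le> a" using that x by (auto simp: GC_def)
        then show ?thesis using x False l l' by (simp add: dd_simp SS_def NU_def)
      qed
    qed
    ultimately show ?thesis by blast
  next
    case False
    then obtain j where jj: "g = (j,j)" "l < j" "j \<le> m" using g l
      by (cases g) (auto simp: GC_def)
    have "(j, j) \<in> Cp m" using jj by (simp add: Cp_iff)
    moreover have "real (2*l) \<le> dd (j,j) x" if "x \<in> GC m l - {g}" for x
    proof -
      obtain a b where x: "x = (a,b)" by (cases x)
      have "a \<noteq> j" using that x jj by (auto simp: GC_def)
      then show ?thesis using x jj by (simp add: dd_simp SS_def NU_def)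
    qed
    ultimately show ?thesis by blast
  qed
next
  fix g assume g: "g \<in> GC m l"
  have "(0, 2*m+3) \<in> GC m l" "(0, 2*m+2) \<in> GC m l" using l by (auto simp: GC_def)
  then show "GC m l - {g} \<noteq> {}" using two_ne top2_ne by metis
qed

lemma phaseD:
  assumes l: "1 \<le> l" "l \<le> m"
  shows "\<forall>g\<in>GD m l. kc_cost (Cp m) dd (GD m l - {(0,l)}) \<le> kc_cost (Cp m) dd (GD m l - {g})"
proof (rule good_step[OF finite_Cp Cp_ne finite_sub_Cp[OF GD_sub], where v="real (2*l+1)"])
  show "(0,l) \<in> GD m l" using l by (simp add: GD_def)
next
  fix c assume "c \<in> Cp m"
  then obtain j p where c: "c = (j,p)" "j \<le> m" "j \<le> p" "p \<le> 2*m+3" by (cases c) (auto simp: Cp_iff)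
  have G: "GD m l - {(0,l)} = GC m (Suc l)" using GD_minus l by simp
  have top: "(0, 2*m+3) \<in> GC m (Suc l)" using l by (simp add: GC_def)
  show "\<exists>x\<in>GD m l - {(0,l)}. dd c x \<le> real (2*l+1)"
    unfolding G
  proof (cases "j < l")
    case True
    have "dd c (0, 2*m+3) \<le> real (2*l+1)" using dd_to_top[of j p m] c True by simp
    then show "\<exists>x\<in>GC m (Suc l). dd c x \<le> real (2*l+1)" using top by blast
  next
    case False
    show "\<exists>x\<in>GC m (Suc l). dd c x \<le> real (2*l+1)"
    proof (cases "j = l")
      case True
      show ?thesis
      proof (cases "p = l")
        case True
        have "dd c (0, 2*m+3) \<le> real (2*l+1)" using c True \<open>j = l\<close> l
          by (simp add: dd_simp SS_def NU_def)
        then show ?thesis using top by blast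
      next
        case False
        have "(0, p) \<in> GC m (Suc l)" using c False \<open>j = l\<close> by (simp add: GC_def)
        moreover have "dd c (0,p) \<le> real (2*l+1)" using c \<open>j = l\<close> l by (simp add: dd_simp SS_def NU_def)
        ultimately show ?thesis by blast
      qed
    next
      case False
      have "(j, j) \<in> GC m (Suc l)" using c False \<open>\<not> j < l\<close> by (simp add: GC_def)
      moreover have "dd c (j,j) \<le> real (2*l+1)" using c l by (simp add: dd_simp SS_def NU_def)
      ultimately show ?thesis by blast
    qed
  qed
next
  fix g assume g: "g \<in> GD m l" "g \<noteq> (0,l)"
  show "\<exists>c\<in>Cp m. \<forall>x\<in>GD m l - {g}. real (2*l+1) \<le> dd c x"
  proof (cases "fst g = 0")
    case True
    then obtain p where p: "g = (0,p)" "l < p" "p \<le> 2*m+3" using g l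
      by (cases g) (auto simp: GD_def)
    have "(l, p) \<in> Cp m" using p l by (simp add: Cp_iff)
    moreover have "real (2*l+1) \<le> dd (l,p) x" if "x \<in> GD m l - {g}" for x
    proof -
      obtain a b where x: "x = (a,b)" by (cases x)
      show ?thesis
      proof (cases "a = 0")
        case True
        then have "l \<le> b" "b \<noteq> p" using that x p by (auto simp: GD_def)
        then show ?thesis using x True p l by (simp add: dd_simp SS_def NU_def)
      next
        case False
        then have "a = b" "Suc l \<le> a" using that x by (auto simp: GD_def)
        then show ?thesis using x False l by (simp add: dd_simp SS_def NU_def)
      qed
    qed
    ultimately show ?thesis by blast
  next
    case False
    then obtain j where jj: "g = (j,j)" "l < j" "j \<le> m" using g l
      by (cases g) (auto simp: GD_def)
    have "(j, j) \<in> Cp m" using jj by (simp add: Cp_iff)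
    moreover have "real (2*l+1) \<le> dd (j,j) x" if "x \<in> GD m l - {g}" for x
    proof -
      obtain a b where x: "x = (a,b)" by (cases x)
      have "a \<noteq> j" using that x jj by (auto simp: GD_def)
      then show ?thesis using x jj by (simp add: dd_simp SS_def NU_def)
    qed
    ultimately show ?thesis by blast
  qed
next
  fix g assume g: "g \<in> GD m l"
  have "(0, 2*m+3) \<in> GD m l" "(0, 2*m+2) \<in> GD m l" using l by (auto simp: GD_def)
  then show "GD m l - {g} \<noteq> {}" using two_ne top2_ne by metis
qed

lemma Xs_minus: "Xs m (Suc m) - {(0, Suc m)} = Xs m (Suc (Suc m))"
  by auto

lemma ub_top:
  assumes "c \<in> Cp m"
  shows "dd c (0, 2*m+3) \<le> real (2*m+2)"
proof -
  obtain j p where c: "c = (j,p)" "j \<le> m" using assms by (cases c) (auto simp: Cp_iff)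
  then show ?thesis using dd_to_top[of j p m] by simp
qed

lemma phaseE:
  shows "\<forall>g\<in>Xs m (Suc m). kc_cost (Cp m) dd (Xs m (Suc m) - {(0,Suc m)}) \<le> kc_cost (Cp m) dd (Xs m (Suc m) - {g})"
proof (rule good_step[OF finite_Cp Cp_ne finite_sub_Cp[OF Xs_sub], where v="real (2*m+2)"])
  show "(0,Suc m) \<in> Xs m (Suc m)" by simp
next
  fix c assume "c \<in> Cp m"
  moreover have "(0, 2*m+3) \<in> Xs m (Suc m) - {(0,Suc m)}" by simp
  ultimately show "\<exists>x\<in>Xs m (Suc m) - {(0,Suc m)}. dd c x \<le> real (2*m+2)" using ub_top by blast
next
  fix g assume g: "g \<in> Xs m (Suc m)" "g \<noteq> (0,Suc m)"
  then obtain p where p: "g = (0,p)" "Suc m < p" "p \<le> 2*m+3"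
    by (cases g) auto
  have "(m, p) \<in> Cp m" using p by (simp add: Cp_iff)
  moreover have "real (2*m+2) \<le> dd (m,p) x" if "x \<in> Xs m (Suc m) - {g}" for x
  proof -
    obtain a b where x: "x = (a,b)" by (cases x)
    then have "a = 0" "Suc m \<le> b" "b \<noteq> p" using that p by auto
    then show ?thesis using x p by (simp add: dd_simp SS_def NU_def)
  qed
  ultimately show "\<exists>c\<in>Cp m. \<forall>x\<in>Xs m (Suc m) - {g}. real (2*m+2) \<le> dd c x" by blast
next
  fix g assume g: "g \<in> Xs m (Suc m)"
  have "(0, 2*m+3) \<in> Xs m (Suc m)" "(0, 2*m+2) \<in> Xs m (Suc m)" by auto
  then show "Xs m (Suc m) - {g} \<noteq> {}" using two_ne top2_ne by metis
qed

lemma final_cost: "kc_cost (Cp m) dd (Xs m (Suc (Suc m))) = real (2*m+2)"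
proof (rule antisym)
  have "(0, 2*m+3) \<in> Xs m (Suc (Suc m))" by simp
  then show "kc_cost (Cp m) dd (Xs m (Suc (Suc m))) \<le> real (2*m+2)"
    using cost_ub[OF finite_Cp Cp_ne finite_sub_Cp[OF Xs_sub]] ub_top by blast
next
  have c: "(m, Suc m) \<in> Cp m" by (simp add: Cp_iff)
  have "(0, 2*m+3) \<in> Xs m (Suc (Suc m))" by simp
  then have ne: "Xs m (Suc (Suc m)) \<noteq> {}" by blast
  have "real (2*m+2) \<le> dd (m, Suc m) x" if "x \<in> Xs m (Suc (Suc m))" for x
  proof -
    obtain a b where x: "x = (a,b)" by (cases x)
    then have "a = 0" "Suc (Suc m) \<le> b" using that by auto
    then show ?thesis using x by (simp add: dd_simp SS_def NU_def)
  qed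
  then show "real (2*m+2) \<le> kc_cost (Cp m) dd (Xs m (Suc (Suc m)))"
    using cost_lb[OF finite_Cp c finite_sub_Cp[OF Xs_sub] ne] by blast
qed

lemma Xs_eq: "Xs m s = (\<lambda>p. (0,p)) ` {s..2*m+3}" by auto
lemma Cs_eq: "Cs m s = (\<lambda>j. (j,j)) ` {s..m}" by auto

lemma card_Xs: "card (Xs m s) = 2*m+4-s"
proof -
  have "inj_on (\<lambda>p::nat. (0::nat,p)) {s..2*m+3}" by (auto simp: inj_on_def)
  then show ?thesis unfolding Xs_eq by (simp add: card_image)
qed

lemma card_Cs: "card (Cs m s) = m+1-s"
proof -
  have "inj_on (\<lambda>j::nat. (j,j)) {s..m}" by (auto simp: inj_on_def)
  then show ?thesis unfolding Cs_eq by (simp add: card_image)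
qed

lemma card_Cp_ge: "2*m+4 \<le> card (Cp m)"
proof -
  have "card (Xs m 0) \<le> card (Cp m)" using card_mono[OF finite_Cp Xs_sub] .
  then show ?thesis using card_Xs[of m 0] by simp
qed

lemma OPT_le_gen:
  assumes "finite C" "F \<subseteq> C" "F \<noteq> {}" "card F \<le> k"
  shows "kc_OPT C d k \<le> kc_cost C d F"
proof -
  let ?S = "{kc_cost C d F | F. F \<subseteq> C \<and> F \<noteq> {} \<and> card F \<le> k}"
  have fin: "finite ?S"
  proof -
    have "?S \<subseteq> (kc_cost C d) ` Pow C" by auto
    then show ?thesis using assms(1) finite_subset by blast
  qed
  have "kc_cost C d F \<in> ?S" using assms(2-4) by blast
  then show ?thesis unfolding kc_OPT_def using fin by (simp add: Min_le)
qed

lemma OPT_le1: "kc_OPT (Cp m) dd (Suc (Suc m)) \<le> 1"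
proof -
  have O1: "Cs m 0 \<subseteq> Cp m" "(0,0) \<in> Cs m 0" "card (Cs m 0) \<le> Suc (Suc m)"
    using Cs_sub[of m 0] card_Cs[of m 0] by simp_all
  have "kc_OPT (Cp m) dd (Suc (Suc m)) \<le> kc_cost (Cp m) dd (Cs m 0)"
    using OPT_le_gen[OF finite_Cp O1(1) _ O1(3)] O1(2) by blast
  also have "\<dots> \<le> 1"
  proof (rule cost_ub[OF finite_Cp Cp_ne finite_sub_Cp[OF Cs_sub]])
    fix c assume "c \<in> Cp m"
    then obtain j p where c: "c = (j,p)" "j \<le> m" by (cases c) (auto simp: Cp_iff)
    have "(j,j) \<in> Cs m 0" using c by simp
    moreover have "dd c (j,j) \<le> 1" using c by (simp add: dd_simp SS_def NU_def)
    ultimately show "\<exists>x\<in>Cs m 0. dd c x \<le> 1" by blast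
  qed
  finally show ?thesis .
qed

lemma OPT_ge1: "1 \<le> kc_OPT (Cp m) dd (Suc (Suc m))"
proof -
  obtain Oc where Oc: "Oc \<subseteq> Cp m" "Oc \<noteq> {}" "card Oc \<le> Suc (Suc m)"
    and eq: "kc_OPT (Cp m) dd (Suc (Suc m)) = kc_cost (Cp m) dd Oc"
    using OPT_attained[where C="Cp m" and k="Suc (Suc m)" and d=dd, OF finite_Cp Cp_ne] by auto
  have "\<not> Cp m \<subseteq> Oc"
  proof
    assume "Cp m \<subseteq> Oc"
    then have "card (Cp m) \<le> card Oc" using card_mono[OF finite_sub_Cp[OF Oc(1)]] by blast
    then show False using Oc(3) card_Cp_ge[of m] by linarith
  qed
  then obtain c where c: "c \<in> Cp m" "c \<notin> Oc" by blast
  have "1 \<le> dd c x" if "x \<in> Oc" for x using c(2) that dd_pos by metis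
  then have "1 \<le> kc_cost (Cp m) dd Oc" using cost_lb[OF finite_Cp c(1) finite_sub_Cp[OF Oc(1)] Oc(2)] by blast
  then show ?thesis using eq by simp
qed

lemma OPT_one: "kc_OPT (Cp m) dd (Suc (Suc m)) = 1"
  using OPT_le1[of m] OPT_ge1[of m] by linarith

lemma nth_notin_take: "distinct xs \<Longrightarrow> i < length xs \<Longrightarrow> xs ! i \<notin> set (take i xs)"
proof -
  assume a: "distinct xs" "i < length xs"
  have "distinct (take (Suc i) xs)" using a(1) by simp
  then show ?thesis using a(2) by (simp add: take_Suc_conv_app_nth)
qed

lemma exec_exists:
  "\<exists>Fs. rev_greedy_exec (Cp m) dd (Suc (Suc m)) Fs \<and> (\<forall>t. Fs t \<subseteq> Cp m) \<and>
      Fs (card (Cp m) - Suc (Suc m)) = Xs m (Suc (Suc m)) \<and> Suc (Suc m) \<le> card (Cp m)"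
proof -
  define G1 where "G1 = GC m 1"
  have G1sub: "G1 \<subseteq> Cp m" using GC_sub unfolding G1_def .
  define R where "R = Cp m - G1"
  have finR: "finite R" using finite_Cp unfolding R_def by simp
  obtain xs where xs: "set xs = R" "distinct xs" using finite_distinct_list[OF finR] by blast
  define a where "a = length xs"
  define Fs where "Fs t = (if t \<le> a then Cp m - set (take t xs)
      else if t \<le> a + 2*m then (if even (t - a) then GC m ((t - a) div 2 + 1) else GD m ((t - a) div 2 + 1))
      else Xs m (Suc (Suc m)))" for t
  have cardR: "card R = a" using distinct_card[OF xs(2)] xs(1) unfolding a_def by simp
  have dis: "Xs m 1 \<inter> Cs m 1 = {}" by (auto simp: Xs_def Cs_def)
  have cardG1: "card G1 = 3*m+3"
    unfolding G1_def GC_def using card_Un_disjoint[OF _ _ dis] card_Xs[of m 1] card_Cs[of m 1]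
      finite_sub_Cp[OF Xs_sub] finite_sub_Cp[OF Cs_sub] by simp
  have CpRG: "Cp m = R \<union> G1" "R \<inter> G1 = {}" using G1sub unfolding R_def by auto
  have cardCp: "card (Cp m) = a + 3*m + 3"
    using card_Un_disjoint[OF finR finite_sub_Cp[OF G1sub] CpRG(2)] CpRG(1) cardR cardG1 by simp
  have N: "card (Cp m) - Suc (Suc m) = a + 2*m + 1" using cardCp by simp
  have Fa: "Fs a = GC m 1"
  proof -
    have "Fs a = Cp m - set xs" unfolding Fs_def a_def by simp
    also have "\<dots> = G1" using CpRG xs(1) by blast
    finally show ?thesis unfolding G1_def .
  qed
  have mid: "Fs t = (if even (t - a) then GC m ((t - a) div 2 + 1) else GD m ((t - a) div 2 + 1))"
    if "a \<le> t" "t \<le> a + 2*m" for t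
  proof (cases "t = a")
    case True then show ?thesis using Fa by simp
  next
    case False then show ?thesis using that unfolding Fs_def by simp
  qed
  have sub: "Fs t \<subseteq> Cp m" for t
    unfolding Fs_def using GC_sub GD_sub Xs_sub by auto
  have exec: "rev_greedy_exec (Cp m) dd (Suc (Suc m)) Fs"
    unfolding rev_greedy_exec_def
  proof (intro conjI allI impI)
    show "Fs 0 = Cp m" unfolding Fs_def by simp
  next
    fix i assume "i < card (Cp m) - Suc (Suc m)"
    then have i: "i < a + 2*m + 1" using N by simp
    show "\<exists>f\<in>Fs i. Fs (Suc i) = Fs i - {f} \<and>
        (\<forall>g\<in>Fs i. kc_cost (Cp m) dd (Fs i - {f}) \<le> kc_cost (Cp m) dd (Fs i - {g}))"
    proof (cases "i < a")
      case True
      have Fi: "Fs i = Cp m - set (take i xs)" using True unfolding Fs_def by simp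
      have FSi: "Fs (Suc i) = Cp m - set (take (Suc i) xs)" using True unfolding Fs_def by simp
      have il: "i < length xs" using True a_def by simp
      have tk: "take (Suc i) xs = take i xs @ [xs ! i]" using take_Suc_conv_app_nth[OF il] .
      have step: "Fs (Suc i) = Fs i - {xs ! i}" using FSi Fi tk by auto
      have inR: "xs ! i \<in> Cp m" using nth_mem[OF il] xs(1) unfolding R_def by auto
      have mem: "xs ! i \<in> Fs i" using Fi inR nth_notin_take[OF xs(2) il] by simp
      have "set (take (Suc i) xs) \<subseteq> R" using set_take_subset xs(1) by metis
      then have "G1 \<subseteq> Fs (Suc i)" using FSi G1sub unfolding R_def by auto
      then have keep: "GC m 1 \<subseteq> Fs i - {xs ! i}" using step unfolding G1_def by simp
      show ?thesis using phaseA[OF sub mem keep] step mem by blast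
    next
      case False
      show ?thesis
      proof (cases "i < a + 2*m")
        case True
        define j where "j = i - a"
        have ij: "i = a + j" "j < 2*m" using False True unfolding j_def by auto
        show ?thesis
        proof (cases "even j")
          case True
          then obtain q where q: "j = 2*q" by blast
          have qm: "q < m" using ij q by simp
          have Fi: "Fs i = GC m (Suc q)" using mid[of i] ij q by simp
          have FSi: "Fs (Suc i) = GD m (Suc q)" using mid[of "Suc i"] ij q by simp
          have l: "1 \<le> Suc q" "Suc q \<le> m" using qm by auto
          have step: "Fs (Suc i) = Fs i - {(Suc q, Suc q)}" using Fi FSi GC_minus[OF l(1)] by simp
          have mem: "(Suc q, Suc q) \<in> Fs i" using Fi l by (simp add: GC_def)
          show ?thesis using phaseC[OF l] Fi step mem by auto
        next
          case False
          then obtain q where q: "j = 2*q + 1" using oddE by blast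
          have qm: "q < m" using ij q by simp
          have Fi: "Fs i = GD m (Suc q)" using mid[of i] ij q by simp
          have FSi: "Fs (Suc i) = GC m (Suc (Suc q))" using mid[of "Suc i"] ij q by simp
          have l: "1 \<le> Suc q" "Suc q \<le> m" using qm by auto
          have step: "Fs (Suc i) = Fs i - {(0, Suc q)}" using Fi FSi GD_minus[OF l(1)] by simp
          have mem: "(0, Suc q) \<in> Fs i" using Fi l by (simp add: GD_def)
          show ?thesis using phaseD[OF l] Fi step mem by auto
        qed
      next
        case False
        then have ie: "i = a + 2*m" using i \<open>\<not> i < a\<close> by simp
        have "Fs i = GC m (Suc m)" using mid[of i] ie by simp
        also have "\<dots> = Xs m (Suc m)" by (auto simp: GC_def)
        finally have Fi: "Fs i = Xs m (Suc m)" .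
        have FSi: "Fs (Suc i) = Xs m (Suc (Suc m))" using ie unfolding Fs_def by simp
        have step: "Fs (Suc i) = Fs i - {(0, Suc m)}" using Fi FSi Xs_minus by simp
        have mem: "(0, Suc m) \<in> Fs i" using Fi by simp
        show ?thesis using phaseE Fi step mem by auto
      qed
    qed
  qed
  have fin: "Fs (card (Cp m) - Suc (Suc m)) = Xs m (Suc (Suc m))" using N unfolding Fs_def by simp
  have "Suc (Suc m) \<le> card (Cp m)" using cardCp by simp
  then show ?thesis using exec sub fin by blast
qed

lemma lower_k1:
  "\<exists>(C :: nat set) d Fs. finite C \<and> (1::nat) \<le> card C \<and> metric_on C d \<and>
     rev_greedy_exec C d 1 Fs \<and>
     kc_cost C d (Fs (card C - 1)) = (2 * real (1::nat) - 2) * kc_OPT C d 1 \<and>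
     (2 \<le> (1::nat) \<longrightarrow> kc_OPT C d 1 > 0)"
proof -
  let ?C = "{0::nat}" and ?d = "\<lambda>x::nat. \<lambda>y::nat. (0::real)" and ?Fs = "\<lambda>t::nat. {0::nat}"
  have m: "metric_on ?C ?d" unfolding metric_on_def by simp
  have e: "rev_greedy_exec ?C ?d 1 ?Fs" unfolding rev_greedy_exec_def by simp
  have c: "kc_cost ?C ?d (?Fs (card ?C - 1)) = 0" by (simp add: kc_cost_def dist_to_def)
  have "finite ?C \<and> (1::nat) \<le> card ?C \<and> metric_on ?C ?d \<and>
     rev_greedy_exec ?C ?d 1 ?Fs \<and>
     kc_cost ?C ?d (?Fs (card ?C - 1)) = (2 * real (1::nat) - 2) * kc_OPT ?C ?d 1 \<and>
     (2 \<le> (1::nat) \<longrightarrow> kc_OPT ?C ?d 1 > 0)" using m e c by simp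
  then show ?thesis by (intro exI)
qed

lemma lower_k2:
  "\<exists>(C :: nat set) d Fs. finite C \<and> Suc (Suc m) \<le> card C \<and> metric_on C d \<and>
     rev_greedy_exec C d (Suc (Suc m)) Fs \<and>
     kc_cost C d (Fs (card C - Suc (Suc m))) = (2 * real (Suc (Suc m)) - 2) * kc_OPT C d (Suc (Suc m)) \<and>
     (2 \<le> Suc (Suc m) \<longrightarrow> kc_OPT C d (Suc (Suc m)) > 0)"
proof -
  obtain Fs where Fs: "rev_greedy_exec (Cp m) dd (Suc (Suc m)) Fs" "\<And>t. Fs t \<subseteq> Cp m"
    "Fs (card (Cp m) - Suc (Suc m)) = Xs m (Suc (Suc m))" "Suc (Suc m) \<le> card (Cp m)"
    using exec_exists[of m] by blast
  have inv: "\<And>x. x \<in> Cp m \<Longrightarrow> prod_decode (prod_encode x) = x" by simp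
  let ?C = "prod_encode ` Cp m"
  let ?d = "\<lambda>x y. dd (prod_decode x) (prod_decode y)"
  let ?Fs = "\<lambda>t. prod_encode ` Fs t"
  have cardC: "card ?C = card (Cp m)" using card_image[OF inj_prod_encode] .
  have fin: "finite ?C" using finite_Cp by simp
  have met: "metric_on ?C ?d" using transfer_metric[where C="Cp m" and g=prod_decode and h=prod_encode and d=dd, OF inv metric_Cp] .
  have ex: "rev_greedy_exec ?C ?d (Suc (Suc m)) ?Fs" using transfer_exec[where C="Cp m" and g=prod_decode and h=prod_encode and d=dd, OF inv Fs(1,2)] .
  have cost: "kc_cost ?C ?d (?Fs (card ?C - Suc (Suc m))) = real (2*m+2)"
  proof -
    have "kc_cost ?C ?d (?Fs (card ?C - Suc (Suc m))) = kc_cost (Cp m) dd (Fs (card (Cp m) - Suc (Suc m)))"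
      using transfer_cost[where C="Cp m" and g=prod_decode and h=prod_encode and d=dd, OF inv Fs(2)] cardC
      by metis
    then show ?thesis using Fs(3) final_cost[of m] by simp
  qed
  have opt: "kc_OPT ?C ?d (Suc (Suc m)) = 1"
    using transfer_OPT[where C="Cp m" and g=prod_decode and h=prod_encode and d=dd, OF inv] OPT_one[of m]
    by simp
  have "real (2*m+2) = (2 * real (Suc (Suc m)) - 2) * 1" by simp
  then have "kc_cost ?C ?d (?Fs (card ?C - Suc (Suc m))) = (2 * real (Suc (Suc m)) - 2) * kc_OPT ?C ?d (Suc (Suc m))"
    using cost opt by simp
  moreover have "kc_OPT ?C ?d (Suc (Suc m)) > 0" using opt by simp
  ultimately have "finite ?C \<and> Suc (Suc m) \<le> card ?C \<and> metric_on ?C ?d \<and>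
     rev_greedy_exec ?C ?d (Suc (Suc m)) ?Fs \<and>
     kc_cost ?C ?d (?Fs (card ?C - Suc (Suc m))) = (2 * real (Suc (Suc m)) - 2) * kc_OPT ?C ?d (Suc (Suc m)) \<and>
     (2 \<le> Suc (Suc m) \<longrightarrow> kc_OPT ?C ?d (Suc (Suc m)) > 0)" using fin cardC Fs(4) met ex by simp
  then show ?thesis by (intro exI)
qed

theorem theorem1:
  shows "(\<forall>(C :: 'a set) d k Fs. finite C \<and> 1 \<le> k \<and> k \<le> card C \<and> metric_on C d \<and>
            rev_greedy_exec C d k Fs \<longrightarrow>
            kc_cost C d (Fs (card C - k)) \<le> 2 * real k * kc_OPT C d k)
       \<and> (\<forall>k::nat. 1 \<le> k \<longrightarrow>
            (\<exists>(C :: nat set) d Fs. finite C \<and> k \<le> card C \<and> metric_on C d \<and>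
               rev_greedy_exec C d k Fs \<and>
               kc_cost C d (Fs (card C - k)) = (2 * real k - 2) * kc_OPT C d k \<and>
               (2 \<le> k \<longrightarrow> kc_OPT C d k > 0)))"
proof (intro conjI allI impI)
  fix C :: "'a set" and d k Fs
  assume "finite C \<and> 1 \<le> k \<and> k \<le> card C \<and> metric_on C d \<and> rev_greedy_exec C d k Fs"
  then have h: "finite C" "1 \<le> k" "k \<le> card C" "metric_on C d" "rev_greedy_exec C d k Fs" by auto
  show "kc_cost C d (Fs (card C - k)) \<le> 2 * real k * kc_OPT C d k"
    by (rule part1[OF h])
next
  fix k :: nat assume k: "1 \<le> k"
  show "\<exists>(C :: nat set) d Fs. finite C \<and> k \<le> card C \<and> metric_on C d \<and>
               rev_greedy_exec C d k Fs \<and>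
               kc_cost C d (Fs (card C - k)) = (2 * real k - 2) * kc_OPT C d k \<and>
               (2 \<le> k \<longrightarrow> kc_OPT C d k > 0)"
  proof (cases "k = 1")
    case True
    show ?thesis unfolding True by (rule lower_k1)
  next
    case False
    define m where "m = k - 2"
    have eq: "k = Suc (Suc m)" using k False unfolding m_def by simp
    show ?thesis unfolding eq by (rule lower_k2)
  qed
qed

end
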